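(* Let $f\in H^p(\mathbb B)$ and $n\in\mathbb N$. If $1\le p<\infty$ then $$|f^{(n)}(0)|\le\sqrt2\,n!\,e^{1/p}\Big(1+\frac{np}{2}\Big)^{1/p}\|f\|_p,$$ and if $p=\infty$ then $|f^{(n)}(0)|\le n!\,\|f\|_\infty$.
   Context: $\mathbb H$ quaternions, $\mathbb S=\{q:q^2=-1\}$, $\mathbb B$ open unit ball. Slice regular functions on $\mathbb B$ are exactly convergent power series $f(q)=\sum_nq^na_n$, and $f^{(n)}=\partial^nf/\partial x^n$ denotes the $n$-th slice derivative, so $a_n=f^{(n)}(0)/n!$. Hardy spaces: $\|f\|_p=\sup_{I\in\mathbb S}\lim_{r\to1^-}(\frac1{2\pi}\int_{-\pi}^\pi|f(re^{I\theta})|^pd\theta)^{1/p}$ for $p<\infty$, $\|f\|_\infty=\sup_{\mathbb B}|f|$, $H^p(\mathbb B)=\{f$ regular on $\mathbb B:\|f\|_p<\infty\}$. *)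

theory Defs
  imports "HOL-Analysis.Analysis"
begin

codatatype quat = Quat (QRe: real) (QI: real) (QJ: real) (QK: real)

lemma quat_eq_iff: "x = y \<longleftrightarrow> QRe x = QRe y \<and> QI x = QI y \<and> QJ x = QJ y \<and> QK x = QK y"
  by (auto intro: quat.expand)

instantiation quat :: ab_group_add
begin
primcorec zero_quat where "QRe 0 = 0" | "QI 0 = 0" | "QJ 0 = 0" | "QK 0 = 0"
primcorec plus_quat where
  "QRe (x + y) = QRe x + QRe y" | "QI (x + y) = QI x + QI y"
| "QJ (x + y) = QJ x + QJ y" | "QK (x + y) = QK x + QK y"
primcorec uminus_quat where
  "QRe (- x) = - QRe x" | "QI (- x) = - QI x" | "QJ (- x) = - QJ x" | "QK (- x) = - QK x"
primcorec minus_quat where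
  "QRe (x - y) = QRe x - QRe y" | "QI (x - y) = QI x - QI y"
| "QJ (x - y) = QJ x - QJ y" | "QK (x - y) = QK x - QK y"
instance by standard (simp_all add: quat_eq_iff)
end

instantiation quat :: ring_1
begin
primcorec one_quat where "QRe 1 = 1" | "QI 1 = 0" | "QJ 1 = 0" | "QK 1 = 0"
primcorec times_quat where
  "QRe (x * y) = QRe x * QRe y - QI x * QI y - QJ x * QJ y - QK x * QK y"
| "QI (x * y) = QRe x * QI y + QI x * QRe y + QJ x * QK y - QK x * QJ y"
| "QJ (x * y) = QRe x * QJ y - QI x * QK y + QJ x * QRe y + QK x * QI y"
| "QK (x * y) = QRe x * QK y + QI x * QJ y - QJ x * QI y + QK x * QRe y"
instance by standard (simp_all add: quat_eq_iff algebra_simps)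
end

instantiation quat :: real_algebra_1
begin
primcorec scaleR_quat where
  "QRe (scaleR r x) = r * QRe x" | "QI (scaleR r x) = r * QI x"
| "QJ (scaleR r x) = r * QJ x" | "QK (scaleR r x) = r * QK x"
instance by standard (simp_all add: quat_eq_iff algebra_simps)
end

instantiation quat :: real_normed_algebra_1
begin
definition norm_quat_def:
  "norm x = sqrt ((QRe x)\<^sup>2 + (QI x)\<^sup>2 + (QJ x)\<^sup>2 + (QK x)\<^sup>2)"
definition sgn_quat_def: "sgn x = x /\<^sub>R norm x" for x :: quat
definition dist_quat_def: "dist x y = norm (x - y)" for x y :: quat
definition uniformity_quat_def:
  "(uniformity :: (quat \<times> quat) filter) = (INF e\<in>{0 <..}. principal {(x, y). dist x y < e})"
definition open_quat_def:
  "open (U :: quat set) \<longleftrightarrow> (\<forall>x\<in>U. eventually (\<lambda>(x', y). x' = x \<longrightarrow> y \<in> U) uniformity)"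

lemma quat_norm_mult_sq:
  "((QRe (x*y))\<^sup>2 + (QI (x*y))\<^sup>2 + (QJ (x*y))\<^sup>2 + (QK (x*y))\<^sup>2)
   = ((QRe x)\<^sup>2 + (QI x)\<^sup>2 + (QJ x)\<^sup>2 + (QK x)\<^sup>2) * ((QRe y)\<^sup>2 + (QI y)\<^sup>2 + (QJ y)\<^sup>2 + (QK y)\<^sup>2)"
  for x y :: quat
  by (simp add: power2_eq_square algebra_simps)

instance
proof
  fix r :: real and x y :: quat
  show "(norm x = 0) = (x = 0)"
    by (simp add: norm_quat_def quat_eq_iff add_nonneg_eq_0_iff)
  show "norm (x + y) \<le> norm x + norm y"
  proof -
    have "norm (x + y) = L2_set (\<lambda>i. [QRe x + QRe y, QI x + QI y, QJ x + QJ y, QK x + QK y] ! i) {0..<4}"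
      by (simp add: norm_quat_def L2_set_def numeral_eq_Suc add.assoc)
    also have "\<dots> \<le> L2_set (\<lambda>i. [QRe x, QI x, QJ x, QK x] ! i) {0..<4}
                  + L2_set (\<lambda>i. [QRe y, QI y, QJ y, QK y] ! i) {0..<4}"
      using L2_set_triangle_ineq[of "\<lambda>i. [QRe x, QI x, QJ x, QK x] ! i"
            "\<lambda>i. [QRe y, QI y, QJ y, QK y] ! i" "{0..<4}"]
      by (simp add: numeral_eq_Suc L2_set_def add.assoc)
    also have "\<dots> = norm x + norm y"
      by (simp add: norm_quat_def L2_set_def numeral_eq_Suc add.assoc)
    finally show ?thesis .
  qed
  show "norm (scaleR r x) = \<bar>r\<bar> * norm x"
    by (simp add: norm_quat_def power_mult_distrib distrib_left [symmetric] real_sqrt_mult)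
  show "norm (x * y) \<le> norm x * norm y"
    unfolding norm_quat_def quat_norm_mult_sq real_sqrt_mult by simp
  show "norm (1::quat) = 1"
    by (simp add: norm_quat_def)
qed (rule sgn_quat_def dist_quat_def open_quat_def uniformity_quat_def)+
end

definition qball :: "quat set" where
  "qball = {q. norm q < 1}"

definition imag_units :: "quat set" where
  "imag_units = {q. q * q = - 1}"

text \<open>Slice regular functions on the ball: exactly the convergent power series
  f(q) = sum q^n a_n (coefficients on the right).\<close>
definition slice_regular_ball :: "(quat \<Rightarrow> quat) \<Rightarrow> bool" where
  "slice_regular_ball f \<longleftrightarrow> (\<exists>a :: nat \<Rightarrow> quat. \<forall>q\<in>qball. (\<lambda>n. q ^ n * a n) sums f q)"

text \<open>Slice derivative: the derivative along the real direction x, i.e. df/dx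
  on the slice through q (adding a real number stays in the same slice).\<close>
definition slice_deriv :: "(quat \<Rightarrow> quat) \<Rightarrow> quat \<Rightarrow> quat" where
  "slice_deriv f q = vector_derivative (\<lambda>t::real. f (q + of_real t)) (at 0)"

definition integral_mean :: "real \<Rightarrow> (quat \<Rightarrow> quat) \<Rightarrow> quat \<Rightarrow> real \<Rightarrow> real" where
  "integral_mean p f I r =
     ((1 / (2 * pi)) * integral {-pi..pi}
        (\<lambda>\<theta>. (norm (f (r *\<^sub>R (of_real (cos \<theta>) + I * of_real (sin \<theta>))))) powr p)) powr (1 / p)"

definition hardy_norm :: "real \<Rightarrow> (quat \<Rightarrow> quat) \<Rightarrow> ereal" where
  "hardy_norm p f = (SUP I\<in>imag_units. Lim (at_left (1::real)) (\<lambda>r. ereal (integral_mean p f I r)))"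

definition hardy_norm_inf :: "(quat \<Rightarrow> quat) \<Rightarrow> ereal" where
  "hardy_norm_inf f = (SUP q\<in>qball. ereal (norm (f q)))"

end

theory Submission
  imports Defs
begin

definition qS :: "(nat \<Rightarrow> quat) \<Rightarrow> real \<Rightarrow> quat" where
  "qS b y = (\<Sum>k. y ^ k *\<^sub>R b k)"

definition qD :: "(nat \<Rightarrow> quat) \<Rightarrow> nat \<Rightarrow> quat" where
  "qD b k = real (Suc k) *\<^sub>R b (Suc k)"

lemma bl_QRe: "bounded_linear QRe"
  by (rule bounded_linear_intro[where K=1]) (auto simp: norm_quat_def intro: real_le_rsqrt)
lemma bl_QI: "bounded_linear QI"
  by (rule bounded_linear_intro[where K=1]) (auto simp: norm_quat_def intro: real_le_rsqrt)
lemma bl_QJ: "bounded_linear QJ"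
  by (rule bounded_linear_intro[where K=1]) (auto simp: norm_quat_def intro: real_le_rsqrt)
lemma bl_QK: "bounded_linear QK"
  by (rule bounded_linear_intro[where K=1]) (auto simp: norm_quat_def intro: real_le_rsqrt)

definition qe1 :: quat where "qe1 = Quat 0 1 0 0"
definition qe2 :: quat where "qe2 = Quat 0 0 1 0"
definition qe3 :: quat where "qe3 = Quat 0 0 0 1"

lemma quat_decomp: "x = QRe x *\<^sub>R 1 + QI x *\<^sub>R qe1 + QJ x *\<^sub>R qe2 + QK x *\<^sub>R qe3"
  by (simp add: quat_eq_iff qe1_def qe2_def qe3_def)

lemma comp_sums:
  assumes "summable (\<lambda>k. y ^ k *\<^sub>R b k)" "bounded_linear g"
  shows "(\<lambda>k. g (b k) * y ^ k) sums g (qS b y)"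
proof -
  have "(\<lambda>k. g (y ^ k *\<^sub>R b k)) sums g (qS b y)"
    unfolding qS_def by (rule bounded_linear.sums[OF assms(2)]) (use assms(1) in \<open>simp add: summable_sums\<close>)
  then show ?thesis using linear.scaleR[OF bounded_linear.linear[OF assms(2)]] by (simp add: mult.commute)
qed

lemma quat_sums_comp:
  assumes "(\<lambda>k. QRe (X k)) sums QRe s" "(\<lambda>k. QI (X k)) sums QI s"
     "(\<lambda>k. QJ (X k)) sums QJ s" "(\<lambda>k. QK (X k)) sums QK s"
  shows "X sums s"
proof -
  have "(\<lambda>k. QRe (X k) *\<^sub>R 1 + QI (X k) *\<^sub>R qe1 + QJ (X k) *\<^sub>R qe2 + QK (X k) *\<^sub>R qe3) sums
        (QRe s *\<^sub>R 1 + QI s *\<^sub>R qe1 + QJ s *\<^sub>R qe2 + QK s *\<^sub>R qe3)"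
    by (intro sums_add sums_scaleR_left assms)
  moreover have "(\<lambda>k. QRe (X k) *\<^sub>R 1 + QI (X k) *\<^sub>R qe1 + QJ (X k) *\<^sub>R qe2 + QK (X k) *\<^sub>R qe3) = X"
    by (rule ext, rule quat_decomp[symmetric])
  moreover have "QRe s *\<^sub>R 1 + QI s *\<^sub>R qe1 + QJ s *\<^sub>R qe2 + QK s *\<^sub>R qe3 = s"
    by (rule quat_decomp[symmetric])
  ultimately show ?thesis by simp
qed

lemma comp_deriv:
  assumes conv: "\<And>y. \<bar>y\<bar> < 1 \<Longrightarrow> summable (\<lambda>k. y ^ k *\<^sub>R b k)" and bl: "bounded_linear g"
    and x: "\<bar>x\<bar> < 1"
  shows "((\<lambda>y. \<Sum>k. g (b k) * y ^ k) has_real_derivative (\<Sum>k. g (qD b k) * x ^ k)) (at x)"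
    and "(\<lambda>k. g (qD b k) * x ^ k) sums (\<Sum>k. g (qD b k) * x ^ k)"
proof -
  define K where "K = (1 + \<bar>x\<bar>) / 2"
  have K: "\<bar>x\<bar> < K" "\<bar>K\<bar> < 1" using x by (auto simp: K_def)
  have sm: "summable (\<lambda>k. g (b k) * y ^ k)" if "\<bar>y\<bar> < 1" for y
    using comp_sums[OF conv[OF that] bl] by (rule sums_summable)
  have dd: "diffs (\<lambda>k. g (b k)) = (\<lambda>k. g (qD b k))"
    by (auto simp: diffs_def qD_def linear.scaleR[OF bounded_linear.linear[OF bl]])
  have "DERIV (\<lambda>x. \<Sum>n. g (b n) * x^n) x :> (\<Sum>n. diffs (\<lambda>k. g (b k)) n * x^n)"
    by (rule termdiffs_strong[OF sm[of K]]) (use K in auto)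
  then show "((\<lambda>y. \<Sum>k. g (b k) * y ^ k) has_real_derivative (\<Sum>k. g (qD b k) * x ^ k)) (at x)"
    by (simp add: dd)
  have "summable (\<lambda>n. diffs (\<lambda>k. g (b k)) n * x ^ n)"
    by (rule termdiff_converges[of x 1]) (use x sm in auto)
  then show "(\<lambda>k. g (qD b k) * x ^ k) sums (\<Sum>k. g (qD b k) * x ^ k)"
    by (simp add: dd summable_sums)
qed

lemma qD_conv:
  assumes conv: "\<And>y. \<bar>y\<bar> < 1 \<Longrightarrow> summable (\<lambda>k. y ^ k *\<^sub>R b k)" and x: "\<bar>x\<bar> < 1"
  shows "summable (\<lambda>k. x ^ k *\<^sub>R qD b k)"
proof -
  let ?s = "Quat (\<Sum>k. QRe (qD b k) * x ^ k) (\<Sum>k. QI (qD b k) * x ^ k)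
                 (\<Sum>k. QJ (qD b k) * x ^ k) (\<Sum>k. QK (qD b k) * x ^ k)"
  have "(\<lambda>k. x ^ k *\<^sub>R qD b k) sums ?s"
    apply (rule quat_sums_comp)
    using comp_deriv(2)[OF conv bl_QRe x] comp_deriv(2)[OF conv bl_QI x]
      comp_deriv(2)[OF conv bl_QJ x] comp_deriv(2)[OF conv bl_QK x]
    by (simp_all add: mult.commute)
  then show ?thesis by (rule sums_summable)
qed

lemma qS_comp_eq:
  assumes "summable (\<lambda>k. y ^ k *\<^sub>R b k)" "bounded_linear g"
  shows "g (qS b y) = (\<Sum>k. g (b k) * y ^ k)"
  using comp_sums[OF assms] by (simp add: sums_iff)

lemma qS_deriv:
  assumes conv: "\<And>y. \<bar>y\<bar> < 1 \<Longrightarrow> summable (\<lambda>k. y ^ k *\<^sub>R b k)" and x: "\<bar>x\<bar> < 1"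
  shows "(qS b has_vector_derivative qS (qD b) x) (at x)"
proof -
  define h where "h = (\<lambda>y. (\<Sum>k. QRe (b k) * y ^ k) *\<^sub>R 1 + (\<Sum>k. QI (b k) * y ^ k) *\<^sub>R qe1
     + (\<Sum>k. QJ (b k) * y ^ k) *\<^sub>R qe2 + (\<Sum>k. QK (b k) * y ^ k) *\<^sub>R qe3)"
  have eq: "h y = qS b y" if "y \<in> {-1<..<1}" for y
  proof -
    have "\<bar>y\<bar> < 1" using that by auto
    note c = conv[OF this]
    show ?thesis unfolding h_def
      by (subst (5) quat_decomp) (simp add: qS_comp_eq[OF c bl_QRe] qS_comp_eq[OF c bl_QI]
          qS_comp_eq[OF c bl_QJ] qS_comp_eq[OF c bl_QK])
  qed
  have cD: "summable (\<lambda>k. x ^ k *\<^sub>R qD b k)" by (rule qD_conv[OF conv x])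
  have eqD: "((\<Sum>k. QRe (qD b k) * x ^ k) *\<^sub>R 1 + (\<Sum>k. QI (qD b k) * x ^ k) *\<^sub>R qe1
     + (\<Sum>k. QJ (qD b k) * x ^ k) *\<^sub>R qe2 + (\<Sum>k. QK (qD b k) * x ^ k) *\<^sub>R qe3) = qS (qD b) x"
    by (subst (5) quat_decomp) (simp add: qS_comp_eq[OF cD bl_QRe] qS_comp_eq[OF cD bl_QI]
          qS_comp_eq[OF cD bl_QJ] qS_comp_eq[OF cD bl_QK])
  have "(h has_vector_derivative
     ((\<Sum>k. QRe (qD b k) * x ^ k) *\<^sub>R 1 + (\<Sum>k. QI (qD b k) * x ^ k) *\<^sub>R qe1
     + (\<Sum>k. QJ (qD b k) * x ^ k) *\<^sub>R qe2 + (\<Sum>k. QK (qD b k) * x ^ k) *\<^sub>R qe3)) (at x)"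
    unfolding h_def
    using comp_deriv(1)[OF conv bl_QRe x] comp_deriv(1)[OF conv bl_QI x]
      comp_deriv(1)[OF conv bl_QJ x] comp_deriv(1)[OF conv bl_QK x]
    by (intro derivative_eq_intros) auto
  then show ?thesis unfolding eqD
    by (rule has_vector_derivative_transform_within_open[where S="{-1<..<1}"]) (use x eq in auto)
qed

lemma qD_pow: "(qD ^^ n) b k = (fact (k + n) / fact k) *\<^sub>R b (k + n)"
proof (induction n arbitrary: k)
  case 0 then show ?case by simp
next
  case (Suc n)
  have "(qD ^^ Suc n) b k = real (Suc k) *\<^sub>R ((fact (Suc k + n) / fact (Suc k)) *\<^sub>R b (Suc k + n))"
    by (simp add: qD_def Suc)
  also have "\<dots> = (fact (k + Suc n) / fact k) *\<^sub>R b (k + Suc n)"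
  proof -
    have e1: "(fact (Suc k) :: real) = real (Suc k) * fact k" by (simp only: fact_Suc of_nat_fact)
    have e2: "Suc k + n = k + Suc n" by simp
    have "real (Suc k) * (fact (Suc k + n) / fact (Suc k)) = (fact (k + Suc n) / fact k :: real)"
      unfolding e1 e2 by (simp del: of_nat_Suc fact_Suc)
    then show ?thesis by (simp only: scaleR_scaleR e2)
  qed
  finally show ?case .
qed

lemma qS_zero: "qS b 0 = b 0"
proof -
  have "(\<lambda>k. (0::real) ^ k *\<^sub>R b k) = (\<lambda>k. if k = 0 then b 0 else 0)" by auto
  then have "(\<lambda>k. (0::real) ^ k *\<^sub>R b k) sums b 0" using sums_single[of 0 "\<lambda>_. b 0"] by simp
  then show ?thesis by (simp add: qS_def sums_iff)
qed

lemma slice_deriv_series: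
  assumes a: "\<forall>q\<in>qball. (\<lambda>n. q ^ n * a n) sums f q"
  shows "\<forall>y. \<bar>y\<bar> < 1 \<longrightarrow> summable (\<lambda>k. y ^ k *\<^sub>R (qD ^^ m) a k)
           \<and> (slice_deriv ^^ m) f (of_real y) = qS ((qD ^^ m) a) y"
proof (induction m)
  case 0
  show ?case
  proof (intro allI impI)
    fix y :: real assume y: "\<bar>y\<bar> < 1"
    have "of_real y \<in> qball" using y by (simp add: qball_def)
    then have "(\<lambda>n. (of_real y) ^ n * a n) sums f (of_real y)" using a by blast
    then have "(\<lambda>n. y ^ n *\<^sub>R a n) sums f (of_real y)"
      by (simp add: scaleR_conv_of_real of_real_power)
    then show "summable (\<lambda>k. y ^ k *\<^sub>R (qD ^^ 0) a k) \<and> (slice_deriv ^^ 0) f (of_real y) = qS ((qD ^^ 0) a) y"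
      by (simp add: qS_def sums_iff)
  qed
next
  case (Suc m)
  define b where "b = (qD ^^ m) a"
  define g where "g = (slice_deriv ^^ m) f"
  have conv: "\<And>y. \<bar>y\<bar> < 1 \<Longrightarrow> summable (\<lambda>k. y ^ k *\<^sub>R b k)"
    and geq: "\<And>y. \<bar>y\<bar> < 1 \<Longrightarrow> g (of_real y) = qS b y"
    using Suc by (auto simp: b_def g_def)
  show ?case
  proof (intro allI impI conjI)
    fix x :: real assume x: "\<bar>x\<bar> < 1"
    show "summable (\<lambda>k. x ^ k *\<^sub>R (qD ^^ Suc m) a k)"
      using qD_conv[OF conv x] by (simp add: b_def)
    have d1: "(qS b has_vector_derivative qS (qD b) x) (at (x + 0))"
      using qS_deriv[OF conv x] by simp
    have d0: "((\<lambda>t. x + t) has_vector_derivative 1) (at (0::real))"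
      by (rule derivative_eq_intros | simp)+
    have "((qS b \<circ> (\<lambda>t. x + t)) has_vector_derivative (1::real) *\<^sub>R qS (qD b) x) (at 0)"
      by (rule vector_diff_chain_at[OF d0]) (use d1 in simp)
    then have d2: "((\<lambda>t. qS b (x + t)) has_vector_derivative qS (qD b) x) (at 0)"
      by (simp add: o_def)
    have d3: "((\<lambda>t. g (of_real x + of_real t)) has_vector_derivative qS (qD b) x) (at 0)"
    proof (rule has_vector_derivative_transform_within_open[OF d2, where S="ball 0 (1 - \<bar>x\<bar>)"])
      fix t :: real assume "t \<in> ball 0 (1 - \<bar>x\<bar>)"
      then have "\<bar>x + t\<bar> < 1" by (auto simp: dist_real_def)
      then show "qS b (x + t) = g (of_real x + of_real t)"
        using geq[of "x + t"] by (simp add: of_real_add[symmetric] del: of_real_add)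
    qed (use x in auto)
    show "(slice_deriv ^^ Suc m) f (of_real x) = qS ((qD ^^ Suc m) a) x"
      using vector_derivative_at[OF d3] by (simp add: slice_deriv_def g_def b_def)
  qed
qed

lemma slice_deriv_zero:
  assumes a: "\<forall>q\<in>qball. (\<lambda>n. q ^ n * a n) sums f q"
  shows "(slice_deriv ^^ n) f 0 = fact n *\<^sub>R a n"
  using slice_deriv_series[OF a, rule_format, of 0 n] by (simp add: qS_zero qD_pow)

lemma series_has_integral:
  fixes u :: "nat \<Rightarrow> real \<Rightarrow> 'c::banach"
  assumes bnd: "\<And>k x. x \<in> {a..b} \<Longrightarrow> norm (u k x) \<le> M k" and M: "summable M"
    and cont: "\<And>k. continuous_on {a..b} (u k)"
    and I: "\<And>k. (u k has_integral I k) {a..b}"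
  shows "((\<lambda>x. \<Sum>k. u k x) has_integral (\<Sum>k. I k)) {a..b}"
proof -
  have ul: "uniform_limit {a..b} (\<lambda>n x. \<Sum>i<n. u i x) (\<lambda>x. \<Sum>i. u i x) sequentially"
    by (rule Weierstrass_m_test[OF bnd M])
  have c: "\<And>n. continuous_on {a..b} (\<lambda>x. \<Sum>i<n. u i x)"
    by (intro continuous_intros cont)
  obtain In J where In: "\<And>n. ((\<lambda>x. \<Sum>i<n. u i x) has_integral In n) {a..b}"
    and J: "((\<lambda>x. \<Sum>i. u i x) has_integral J) {a..b}" and lim: "(In \<longlongrightarrow> J) sequentially"
    by (rule uniform_limit_integral[OF ul c]) auto
  have "In = (\<lambda>n. \<Sum>i<n. I i)"
    by (rule ext, rule has_integral_unique[OF In]) (intro has_integral_sum I, simp)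
  then have "I sums J" using lim by (simp add: sums_def)
  then show ?thesis using J by (simp add: sums_iff)
qed

lemma sin_int_pi: "sin (real_of_int j * pi) = 0"
proof (cases j rule: int_cases)
  case (nonneg n) then show ?thesis by simp
next
  case (neg n)
  have "sin (real_of_int j * pi) = - sin (real (Suc n) * pi)"
    by (simp add: neg sin_minus[symmetric] del: of_nat_Suc)
  then show ?thesis by (simp del: of_nat_Suc)
qed

lemma cis_orth:
  fixes j :: int
  shows "((\<lambda>x. cis (of_int j * x)) has_integral (if j = 0 then complex_of_real (2 * pi) else 0)) {-pi..pi}"
proof (cases "j = 0")
  case True
  then show ?thesis using has_integral_const_real[of "1::complex" "-pi" pi]
    by (simp add: scaleR_conv_of_real)
next
  case False
  define F where "F = (\<lambda>x::real. exp (\<i> * of_int j * of_real x) / (\<i> * of_int j))"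
  have d: "(F has_vector_derivative cis (of_int j * x)) (at x within {-pi..pi})" for x
  proof -
    have "((\<lambda>z. exp (\<i> * of_int j * z) / (\<i> * of_int j)) has_field_derivative
           (exp (\<i> * of_int j * of_real x) * (\<i> * of_int j)) / (\<i> * of_int j)) (at (of_real x))"
      by (insert False) (rule derivative_eq_intros refl | simp add: field_simps)+
    then have "(F has_vector_derivative (exp (\<i> * of_int j * of_real x) * (\<i> * of_int j)) / (\<i> * of_int j)) (at x within {-pi..pi})"
      unfolding F_def by (rule has_vector_derivative_real_field)
    moreover have "(exp (\<i> * of_int j * of_real x) * (\<i> * of_int j)) / (\<i> * of_int j) = cis (of_int j * x)"
      using False by (simp add: cis_conv_exp mult_ac)
    ultimately show ?thesis by simp
  qed
  have "((\<lambda>x. cis (of_int j * x)) has_integral (F pi - F (-pi))) {-pi..pi}"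
    by (rule fundamental_theorem_of_calculus) (use d in auto)
  moreover have "F pi - F (-pi) = 0"
  proof -
    have "exp (\<i> * of_int j * of_real pi) = cis (of_int j * pi)" by (simp add: cis_conv_exp mult_ac)
    moreover have "exp (\<i> * of_int j * of_real (-pi)) = cis (-(of_int j * pi))" by (simp add: cis_conv_exp mult_ac)
    moreover have "cis (of_int j * pi) = cis (-(of_int j * pi))"
      by (simp add: complex_eq_iff sin_int_pi)
    ultimately show ?thesis by (simp add: F_def)
  qed
  ultimately show ?thesis using False by simp
qed

definition fs :: "(nat \<Rightarrow> complex) \<Rightarrow> real \<Rightarrow> complex" where
  "fs c x = (\<Sum>k. c k * cis (real k * x))"

lemma fs_summable:
  assumes "summable (\<lambda>k. norm (c k))"
  shows "summable (\<lambda>k. c k * cis (real k * x))"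
  by (rule summable_norm_cancel, rule summable_comparison_test'[OF assms]) (simp add: norm_mult)

lemma fs_cont:
  assumes c: "summable (\<lambda>k. norm (c k))"
  shows "continuous_on A (fs c)"
proof -
  have ul: "uniform_limit A (\<lambda>n x. \<Sum>i<n. c i * cis (real i * x)) (\<lambda>x. \<Sum>i. c i * cis (real i * x)) sequentially"
    by (rule Weierstrass_m_test[OF _ c]) (simp add: norm_mult)
  show ?thesis unfolding fs_def
    by (rule uniform_limit_theorem[OF _ ul]) (auto intro!: always_eventually continuous_intros)
qed

lemma fs_coeff:
  assumes c: "summable (\<lambda>k. norm (c k))"
  shows "((\<lambda>x. cis (-(real n * x)) * fs c x) has_integral (complex_of_real (2 * pi) * c n)) {-pi..pi}"
proof -
  define u where "u = (\<lambda>k x. c k * cis (of_int (int k - int n) * x))"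
  have eq: "cis (-(real n * x)) * fs c x = (\<Sum>k. u k x)" for x
  proof -
    have "cis (-(real n * x)) * fs c x = (\<Sum>k. cis (-(real n * x)) * (c k * cis (real k * x)))"
      unfolding fs_def by (rule suminf_mult[symmetric, OF fs_summable[OF c]])
    also have "\<dots> = (\<Sum>k. u k x)"
      by (rule suminf_cong) (simp add: u_def cis_mult algebra_simps)
    finally show ?thesis .
  qed
  have "((\<lambda>x. \<Sum>k. u k x) has_integral (\<Sum>k. c k * (if int k - int n = 0 then complex_of_real (2 * pi) else 0))) {-pi..pi}"
  proof (rule series_has_integral[OF _ c])
    show "(u k has_integral (c k * (if int k - int n = 0 then complex_of_real (2 * pi) else 0))) {-pi..pi}" for k
      unfolding u_def by (rule has_integral_mult_right[OF cis_orth])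
  qed (auto simp: u_def norm_mult intro!: continuous_intros)
  moreover have "(\<Sum>k. c k * (if int k - int n = 0 then complex_of_real (2 * pi) else 0)) = complex_of_real (2 * pi) * c n"
  proof -
    have "(\<lambda>k. c k * (if int k - int n = 0 then complex_of_real (2 * pi) else 0)) = (\<lambda>k. if k = n then complex_of_real (2 * pi) * c n else 0)"
      by auto
    then show ?thesis using sums_single[of n "\<lambda>_. complex_of_real (2 * pi) * c n"] by (simp add: sums_iff)
  qed
  ultimately have H: "((\<lambda>x. \<Sum>k. u k x) has_integral complex_of_real (2 * pi) * c n) {-pi..pi}"
    by (simp only:)
  have E: "(\<lambda>x. cis (-(real n * x)) * fs c x) = (\<lambda>x. \<Sum>k. u k x)" by (rule ext) (rule eq)
  show ?thesis unfolding E by (rule H)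
qed

definition pk :: "real \<Rightarrow> real \<Rightarrow> real" where
  "pk \<rho> t = (1 - \<rho>\<^sup>2) / (1 - 2 * \<rho> * cos t + \<rho>\<^sup>2)"

lemma pk_denom:
  fixes \<rho> t :: real
  assumes "0 \<le> \<rho>" "\<rho> < 1"
  shows "(1 - \<rho>)\<^sup>2 \<le> 1 - 2 * \<rho> * cos t + \<rho>\<^sup>2" "0 < 1 - 2 * \<rho> * cos t + \<rho>\<^sup>2"
proof -
  have "\<rho> * cos t \<le> \<rho>" using assms cos_le_one[of t] by (simp add: mult_left_le)
  then show "(1 - \<rho>)\<^sup>2 \<le> 1 - 2 * \<rho> * cos t + \<rho>\<^sup>2" by (simp add: power2_eq_square algebra_simps)
  moreover have "0 < (1 - \<rho>)\<^sup>2" using assms by simp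
  ultimately show "0 < 1 - 2 * \<rho> * cos t + \<rho>\<^sup>2" by linarith
qed

lemma pk_num: "0 \<le> \<rho> \<Longrightarrow> \<rho> < 1 \<Longrightarrow> 0 \<le> 1 - (\<rho>::real)\<^sup>2"
  by (simp add: abs_square_le_1)

lemma pk_nonneg: "0 \<le> \<rho> \<Longrightarrow> \<rho> < 1 \<Longrightarrow> 0 \<le> pk \<rho> t"
  unfolding pk_def by (rule divide_nonneg_pos[OF pk_num pk_denom(2)])

lemma pk_bound: "0 \<le> \<rho> \<Longrightarrow> \<rho> < 1 \<Longrightarrow> pk \<rho> t \<le> (1 - \<rho>\<^sup>2) / (1 - \<rho>)\<^sup>2"
  unfolding pk_def
  by (rule divide_left_mono[OF pk_denom(1) pk_num]) (auto intro!: mult_pos_pos pk_denom(2))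

lemma pk_cont:
  assumes "0 \<le> \<rho>" "\<rho> < 1"
  shows "continuous_on A (pk \<rho>)"
proof -
  have d: "1 - 2*\<rho>*cos t + \<rho>\<^sup>2 \<noteq> 0" for t using pk_denom(2)[OF assms(1,2), of t] by linarith
  show ?thesis unfolding pk_def by (auto intro!: continuous_intros simp: d)
qed

lemma pk_even: "pk \<rho> (- t) = pk \<rho> t"
  by (simp add: pk_def)

lemma pk_series:
  assumes r: "0 \<le> \<rho>" "\<rho> < 1"
  shows "(\<lambda>m. complex_of_real (\<rho> ^ m) * cis (real m * t)) sums (1 / (1 - complex_of_real \<rho> * cis t))"
    and "(\<lambda>m. complex_of_real (\<rho> ^ Suc m) * cis (- (real (Suc m) * t))) sums
           (cnj (complex_of_real \<rho> * cis t) / (1 - cnj (complex_of_real \<rho> * cis t)))"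
    and "1 / (1 - complex_of_real \<rho> * cis t) + cnj (complex_of_real \<rho> * cis t) / (1 - cnj (complex_of_real \<rho> * cis t))
          = complex_of_real (pk \<rho> t)"
proof -
  define z where "z = complex_of_real \<rho> * cis t"
  have nz: "norm z < 1" using r by (simp add: z_def norm_mult)
  have "(\<lambda>m. z ^ m) sums (1 / (1 - z))" by (rule geometric_sums[OF nz])
  moreover have "z ^ m = complex_of_real (\<rho> ^ m) * cis (real m * t)" for m
    by (simp add: z_def power_mult_distrib Complex.DeMoivre)
  ultimately show "(\<lambda>m. complex_of_real (\<rho> ^ m) * cis (real m * t)) sums (1 / (1 - complex_of_real \<rho> * cis t))"
    by (simp add: z_def)
  have nz': "norm (cnj z) < 1" using nz by simp
  have S: "(\<lambda>m. cnj z * cnj z ^ m) sums (cnj z * (1 / (1 - cnj z)))"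
    by (rule sums_mult[OF geometric_sums[OF nz']])
  have E2: "cnj z * cnj z ^ m = complex_of_real (\<rho> ^ Suc m) * cis (- (real (Suc m) * t))" for m
  proof -
    have "cnj z * cnj z ^ m = cnj z ^ Suc m" by simp
    also have "\<dots> = complex_of_real (\<rho> ^ Suc m) * cis (-t) ^ Suc m"
      by (simp add: z_def cis_cnj power_mult_distrib del: power_Suc)
    also have "\<dots> = complex_of_real (\<rho> ^ Suc m) * cis (- (real (Suc m) * t))"
      by (simp only: Complex.DeMoivre) simp
    finally show ?thesis .
  qed
  have E2': "(\<lambda>m. cnj z * cnj z ^ m) = (\<lambda>m. complex_of_real (\<rho> ^ Suc m) * cis (- (real (Suc m) * t)))"
    by (rule ext) (rule E2)
  show "(\<lambda>m. complex_of_real (\<rho> ^ Suc m) * cis (- (real (Suc m) * t))) sums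
           (cnj (complex_of_real \<rho> * cis t) / (1 - cnj (complex_of_real \<rho> * cis t)))"
    using S unfolding E2' z_def[symmetric] by simp
  have D: "0 < 1 - 2 * \<rho> * cos t + \<rho>\<^sup>2" by (rule pk_denom(2)[OF r])
  have z1: "1 - z \<noteq> 0" using nz by auto
  have z2: "1 - cnj z \<noteq> 0" using nz' by auto
  have "1 / (1 - z) + cnj z / (1 - cnj z) = (1 - z * cnj z) / ((1 - z) * (1 - cnj z))"
    using z1 z2 by (simp add: field_simps)
  also have "(1 - z) * (1 - cnj z) = complex_of_real (1 - 2 * \<rho> * cos t + \<rho>\<^sup>2)"
    proof -
    have sc: "\<rho> * (\<rho> * (cos t * cos t)) + \<rho> * (\<rho> * (sin t * sin t)) = \<rho> * \<rho>"
      by (metis distrib_left mult_1_right sin_cos_squared_add3)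
    show ?thesis by (simp add: z_def complex_eq_iff power2_eq_square algebra_simps sc)
  qed
  also have "1 - z * cnj z = complex_of_real (1 - \<rho>\<^sup>2)"
  proof -
    have sc: "\<rho> * (\<rho> * (cos t * cos t)) + \<rho> * (\<rho> * (sin t * sin t)) = \<rho> * \<rho>"
      by (metis distrib_left mult_1_right sin_cos_squared_add3)
    show ?thesis by (simp add: z_def complex_eq_iff power2_eq_square algebra_simps sc)
  qed
  finally show "1 / (1 - complex_of_real \<rho> * cis t) + cnj (complex_of_real \<rho> * cis t) / (1 - cnj (complex_of_real \<rho> * cis t))
          = complex_of_real (pk \<rho> t)"
    by (simp add: z_def pk_def)
qed

lemma pk_int:
  assumes r: "0 \<le> \<rho>" "\<rho> < 1"
  shows "((\<lambda>x. complex_of_real (pk \<rho> (\<theta> - x)) * cis (real k * x)) has_integral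
          (complex_of_real (2 * pi) * (complex_of_real (\<rho> ^ k) * cis (real k * \<theta>)))) {-pi..pi}"
proof -
  define u1 where "u1 = (\<lambda>m x. complex_of_real (\<rho> ^ m) * cis (real m * \<theta>) * cis (of_int (int k - int m) * x))"
  define u2 where "u2 = (\<lambda>m x. complex_of_real (\<rho> ^ Suc m) * cis (- (real (Suc m) * \<theta>)) * cis (of_int (int k + int (Suc m)) * x))"
  have ptw: "complex_of_real (pk \<rho> (\<theta> - x)) * cis (real k * x) = (\<Sum>m. u1 m x) + (\<Sum>m. u2 m x)" for x
  proof -
    note S = pk_series[OF r, of "\<theta> - x"]
    have "complex_of_real (pk \<rho> (\<theta> - x)) =
        (\<Sum>m. complex_of_real (\<rho> ^ m) * cis (real m * (\<theta> - x))) +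
        (\<Sum>m. complex_of_real (\<rho> ^ Suc m) * cis (- (real (Suc m) * (\<theta> - x))))"
      using S by (simp add: sums_iff)
    then have "complex_of_real (pk \<rho> (\<theta> - x)) * cis (real k * x) =
        (\<Sum>m. complex_of_real (\<rho> ^ m) * cis (real m * (\<theta> - x)) * cis (real k * x)) +
        (\<Sum>m. complex_of_real (\<rho> ^ Suc m) * cis (- (real (Suc m) * (\<theta> - x))) * cis (real k * x))"
      using S by (simp add: distrib_right suminf_mult2 sums_summable)
    also have "(\<Sum>m. complex_of_real (\<rho> ^ m) * cis (real m * (\<theta> - x)) * cis (real k * x)) = (\<Sum>m. u1 m x)"
    proof (rule suminf_cong)
      fix m
      have "real m * (\<theta> - x) + real k * x = real m * \<theta> + of_int (int k - int m) * x"
        by (simp add: algebra_simps)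
      then show "complex_of_real (\<rho> ^ m) * cis (real m * (\<theta> - x)) * cis (real k * x) = u1 m x"
        unfolding u1_def by (simp only: mult.assoc cis_mult)
    qed
    also have "(\<Sum>m. complex_of_real (\<rho> ^ Suc m) * cis (- (real (Suc m) * (\<theta> - x))) * cis (real k * x)) = (\<Sum>m. u2 m x)"
    proof (rule suminf_cong)
      fix m
      have "- (real (Suc m) * (\<theta> - x)) + real k * x = - (real (Suc m) * \<theta>) + of_int (int k + int (Suc m)) * x"
        by (simp add: algebra_simps)
      then show "complex_of_real (\<rho> ^ Suc m) * cis (- (real (Suc m) * (\<theta> - x))) * cis (real k * x) = u2 m x"
        unfolding u2_def by (simp only: mult.assoc cis_mult)
    qed
    finally show ?thesis .
  qed
  have geo: "summable (\<lambda>m. \<rho> ^ m)" using r by (simp add: summable_geometric)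
  have geo2: "summable (\<lambda>m. \<rho> ^ Suc m)" using summable_mult[OF geo, of \<rho>] by simp
  have I1: "((\<lambda>x. \<Sum>m. u1 m x) has_integral
     (\<Sum>m. complex_of_real (\<rho> ^ m) * cis (real m * \<theta>) * (if int k - int m = 0 then complex_of_real (2 * pi) else 0))) {-pi..pi}"
  proof (rule series_has_integral[OF _ geo])
    show "(u1 m has_integral (complex_of_real (\<rho> ^ m) * cis (real m * \<theta>) * (if int k - int m = 0 then complex_of_real (2 * pi) else 0))) {-pi..pi}" for m
      unfolding u1_def by (rule has_integral_mult_right[OF cis_orth])
  qed (use r in \<open>auto simp: u1_def norm_mult norm_power intro!: continuous_intros\<close>)
  have I2: "((\<lambda>x. \<Sum>m. u2 m x) has_integral (\<Sum>m. 0)) {-pi..pi}"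
  proof (rule series_has_integral[OF _ geo2])
    show "(u2 m has_integral 0) {-pi..pi}" for m
      using has_integral_mult_right[OF cis_orth[of "int k + int (Suc m)"], of "complex_of_real (\<rho> ^ Suc m) * cis (- (real (Suc m) * \<theta>))"]
      unfolding u2_def by simp
  qed (use r in \<open>auto simp: u2_def norm_mult norm_power intro!: continuous_intros\<close>)
  have sum1: "(\<Sum>m. complex_of_real (\<rho> ^ m) * cis (real m * \<theta>) * (if int k - int m = 0 then complex_of_real (2 * pi) else 0))
      = complex_of_real (2 * pi) * (complex_of_real (\<rho> ^ k) * cis (real k * \<theta>))"
  proof -
    have "(\<lambda>m. complex_of_real (\<rho> ^ m) * cis (real m * \<theta>) * (if int k - int m = 0 then complex_of_real (2 * pi) else 0))
        = (\<lambda>m. if m = k then complex_of_real (2 * pi) * (complex_of_real (\<rho> ^ k) * cis (real k * \<theta>)) else 0)"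
      by (auto simp: mult_ac)
    then show ?thesis
      using sums_single[of k "\<lambda>_. complex_of_real (2 * pi) * (complex_of_real (\<rho> ^ k) * cis (real k * \<theta>))"]
      by (simp add: sums_iff)
  qed
  have "((\<lambda>x. (\<Sum>m. u1 m x) + (\<Sum>m. u2 m x)) has_integral
          (complex_of_real (2 * pi) * (complex_of_real (\<rho> ^ k) * cis (real k * \<theta>)) + 0)) {-pi..pi}"
    using has_integral_add[OF I1 I2] unfolding sum1 by simp
  moreover have "(\<lambda>x. complex_of_real (pk \<rho> (\<theta> - x)) * cis (real k * x)) = (\<lambda>x. (\<Sum>m. u1 m x) + (\<Sum>m. u2 m x))"
    by (rule ext) (rule ptw)
  ultimately show ?thesis by simp
qed

lemma poisson:
  assumes c: "summable (\<lambda>k. norm (c k))" and r: "0 \<le> \<rho>" "\<rho> < 1"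
  shows "((\<lambda>x. complex_of_real (pk \<rho> (\<theta> - x)) * fs c x) has_integral
          (complex_of_real (2 * pi) * (\<Sum>k. c k * (complex_of_real (\<rho> ^ k) * cis (real k * \<theta>))))) {-pi..pi}"
proof -
  define B where "B = (1 - \<rho>\<^sup>2) / (1 - \<rho>)\<^sup>2"
  define u where "u = (\<lambda>k x. c k * (complex_of_real (pk \<rho> (\<theta> - x)) * cis (real k * x)))"
  have ptw: "complex_of_real (pk \<rho> (\<theta> - x)) * fs c x = (\<Sum>k. u k x)" for x
    unfolding fs_def u_def
    by (subst suminf_mult[symmetric, OF fs_summable[OF c]]) (simp add: mult_ac)
  have sX: "summable (\<lambda>k. c k * (complex_of_real (\<rho> ^ k) * cis (real k * \<theta>)))"
  proof (rule summable_norm_cancel, rule summable_comparison_test'[OF c])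
    fix k show "norm (norm (c k * (complex_of_real (\<rho> ^ k) * cis (real k * \<theta>)))) \<le> norm (c k)"
      using r by (simp add: norm_mult norm_power mult_left_le power_le_one)
  qed
  have pc: "continuous_on {-pi..pi} (\<lambda>x. pk \<rho> (\<theta> - x))"
    by (rule continuous_on_compose2[OF pk_cont[OF r, of UNIV]]) (auto intro!: continuous_intros)
  have "((\<lambda>x. \<Sum>k. u k x) has_integral (\<Sum>k. c k * (complex_of_real (2 * pi) * (complex_of_real (\<rho> ^ k) * cis (real k * \<theta>))))) {-pi..pi}"
  proof (rule series_has_integral[where M="\<lambda>k. norm (c k) * B"])
    show "summable (\<lambda>k. norm (c k) * B)" by (rule summable_mult2[OF c])
    show "norm (u k x) \<le> norm (c k) * B" if "x \<in> {-pi..pi}" for k x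
    proof -
      have "pk \<rho> (\<theta> - x) \<le> B" unfolding B_def by (rule pk_bound[OF r])
      then show ?thesis using pk_nonneg[OF r, of "\<theta> - x"]
        by (simp add: u_def norm_mult mult_left_mono)
    qed
    show "continuous_on {-pi..pi} (u k)" for k
      unfolding u_def by (intro continuous_intros continuous_on_of_real pc)
    show "(u k has_integral c k * (complex_of_real (2 * pi) * (complex_of_real (\<rho> ^ k) * cis (real k * \<theta>)))) {-pi..pi}" for k
      unfolding u_def by (rule has_integral_mult_right[OF pk_int[OF r]])
  qed
  moreover have "(\<Sum>k. c k * (complex_of_real (2 * pi) * (complex_of_real (\<rho> ^ k) * cis (real k * \<theta>))))
     = complex_of_real (2 * pi) * (\<Sum>k. c k * (complex_of_real (\<rho> ^ k) * cis (real k * \<theta>)))"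
    by (subst suminf_mult[symmetric, OF sX]) (simp add: mult_ac)
  moreover have "(\<lambda>x. complex_of_real (pk \<rho> (\<theta> - x)) * fs c x) = (\<lambda>x. \<Sum>k. u k x)"
    by (rule ext) (rule ptw)
  ultimately show ?thesis by simp
qed

lemma powr_tangent:
  fixes a t p :: real
  assumes a: "0 \<le> a" and t: "0 \<le> t" and p: "1 \<le> p"
  shows "a powr p + p * a powr (p - 1) * (t - a) \<le> t powr p"
proof (cases "a = 0")
  case True then show ?thesis by simp
next
  case False
  then have a0: "0 < a" using a by simp
  have aa: "a powr (p - 1) * a = a powr p"
  proof -
    have "a powr (p-1) * a powr 1 = a powr (p - 1 + 1)" by (rule powr_add[symmetric])
    then show ?thesis using a0 by simp
  qed
  show ?thesis
  proof (cases "t = 0")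
    case True
    have "a powr p + p * a powr (p - 1) * (t - a) = (1 - p) * a powr p"
      using aa True by (simp add: algebra_simps)
    also have "\<dots> \<le> 0" using p by (simp add: mult_nonpos_nonneg)
    finally show ?thesis using True by simp
  next
    case False
    then have t0: "0 < t" using t by simp
    have der: "DERIV (\<lambda>x. x powr p) x :> p * x powr (p - 1)" if "0 < x" for x
      by (rule has_real_derivative_powr[OF that])
    show ?thesis
    proof (cases "a < t")
      case True
      obtain z where z: "a < z" "z < t" "t powr p - a powr p = (t - a) * (p * z powr (p - 1))"
        using MVT2[OF True, of "\<lambda>x. x powr p" "\<lambda>x. p * x powr (p - 1)"] der a0 by force
      have "a powr (p - 1) \<le> z powr (p - 1)" using z a0 p by (intro powr_mono2) auto
      then have "(t - a) * (p * a powr (p - 1)) \<le> (t - a) * (p * z powr (p - 1))"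
        using True p by (intro mult_left_mono) auto
      then show ?thesis using z by (simp add: algebra_simps)
    next
      case False
      show ?thesis
      proof (cases "t = a")
        case True then show ?thesis by simp
      next
        case False
        with \<open>\<not> a < t\<close> have ta: "t < a" by simp
        obtain z where z: "t < z" "z < a" "a powr p - t powr p = (a - t) * (p * z powr (p - 1))"
          using MVT2[OF ta, of "\<lambda>x. x powr p" "\<lambda>x. p * x powr (p - 1)"] der t0 by force
        have "z powr (p - 1) \<le> a powr (p - 1)" using z t0 p by (intro powr_mono2) auto
        then have "(a - t) * (p * z powr (p - 1)) \<le> (a - t) * (p * a powr (p - 1))"
          using ta p by (intro mult_left_mono) auto
        then show ?thesis using z by (simp add: algebra_simps)
      qed
    qed
  qed
qed

lemma jensen_int:
  fixes w h :: "real \<Rightarrow> real"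
  assumes cw: "continuous_on {a..b} w" and ch: "continuous_on {a..b} h"
    and w0: "\<And>x. x \<in> {a..b} \<Longrightarrow> 0 \<le> w x" and h0: "\<And>x. x \<in> {a..b} \<Longrightarrow> 0 \<le> h x"
    and w1: "integral {a..b} w = 1" and p: "1 \<le> p"
  shows "(integral {a..b} (\<lambda>x. w x * h x)) powr p \<le> integral {a..b} (\<lambda>x. w x * h x powr p)"
proof -
  define A where "A = integral {a..b} (\<lambda>x. w x * h x)"
  have iw: "(w has_integral 1) {a..b}"
    using w1 integrable_continuous_real[OF cw] by (metis has_integral_integrable_integral)
  have iwh: "((\<lambda>x. w x * h x) has_integral A) {a..b}"
    unfolding A_def by (intro integrable_integral integrable_continuous_real continuous_intros cw ch)
  have A0: "0 \<le> A" unfolding A_def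
    by (rule integral_nonneg) (use iwh w0 h0 in auto)
  have chp: "continuous_on {a..b} (\<lambda>x. h x powr p)"
    by (rule continuous_on_powr') (use ch h0 p in \<open>auto intro: continuous_intros\<close>)
  define C where "C = A powr p"
  define D where "D = p * A powr (p - 1)"
  have "((\<lambda>x. (C - D * A) * w x + D * (w x * h x)) has_integral ((C - D * A) * 1 + D * A)) {a..b}"
    by (intro has_integral_add has_integral_mult_right iw iwh)
  moreover have "(\<lambda>x. (C - D * A) * w x + D * (w x * h x)) = (\<lambda>x. w x * (C + D * (h x - A)))"
    by (rule ext) (simp add: algebra_simps)
  ultimately have i1: "((\<lambda>x. w x * (C + D * (h x - A))) has_integral C) {a..b}" by simp
  have "integral {a..b} (\<lambda>x. w x * (C + D * (h x - A))) \<le> integral {a..b} (\<lambda>x. w x * h x powr p)"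
  proof (rule integral_le)
    show "(\<lambda>x. w x * (C + D * (h x - A))) integrable_on {a..b}" using i1 by blast
    show "(\<lambda>x. w x * h x powr p) integrable_on {a..b}"
      by (intro integrable_continuous_real continuous_intros cw chp)
    show "w x * (C + D * (h x - A)) \<le> w x * h x powr p" if "x \<in> {a..b}" for x
      using powr_tangent[OF A0 h0[OF that] p] w0[OF that] unfolding C_def D_def
      by (intro mult_left_mono) auto
  qed
  then show ?thesis using i1 unfolding C_def A_def by (simp add: integral_unique)
qed

lemma mono_lim_ereal:
  fixes h :: "real \<Rightarrow> real"
  assumes mono: "\<And>x y. 0 \<le> x \<Longrightarrow> x \<le> y \<Longrightarrow> y < 1 \<Longrightarrow> h x \<le> h y"
  shows "Lim (at_left 1) (\<lambda>r. ereal (h r)) = (SUP r\<in>{0..<1}. ereal (h r))"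
proof (rule tendsto_Lim[OF trivial_limit_at_left_real], rule order_tendstoI)
  fix a assume "a < (SUP r\<in>{0..<1}. ereal (h r))"
  then obtain r0 where r0: "r0 \<in> {0..<1}" "a < ereal (h r0)" by (auto simp: less_SUP_iff)
  have "eventually (\<lambda>x. x \<in> {r0<..<1}) (at_left (1::real))"
    using r0 by (intro eventually_at_left_real) auto
  then show "eventually (\<lambda>x. a < ereal (h x)) (at_left 1)"
  proof (rule eventually_mono)
    fix x assume "x \<in> {r0<..<1}"
    then have "h r0 \<le> h x" using r0 by (intro mono) auto
    then show "a < ereal (h x)" using r0 by (meson ereal_less_eq(3) less_le_trans)
  qed
next
  fix a assume a: "(SUP r\<in>{0..<1}. ereal (h r)) < a"
  have "eventually (\<lambda>x. x \<in> {0<..<1}) (at_left (1::real))"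
    by (intro eventually_at_left_real) auto
  then show "eventually (\<lambda>x. ereal (h x) < a) (at_left 1)"
  proof (rule eventually_mono)
    fix x assume "x \<in> {0<..<(1::real)}"
    then have "ereal (h x) \<le> (SUP r\<in>{0..<1}. ereal (h r))" by (intro SUP_upper) auto
    then show "ereal (h x) < a" using a by simp
  qed
qed

definition qc :: "complex \<Rightarrow> quat" where "qc w = Quat (Re w) (Im w) 0 0"
definition cPhi :: "quat \<Rightarrow> complex" where "cPhi x = Complex (QRe x) (QI x)"
definition cPsi :: "quat \<Rightarrow> complex" where "cPsi x = Complex (QJ x) (QK x)"

lemma qc_mult: "qc (w * z) = qc w * qc z"
  by (simp add: qc_def quat_eq_iff)

lemma qc_one: "qc 1 = 1"
  by (simp add: qc_def quat_eq_iff)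

lemma qc_power: "qc (w ^ k) = qc w ^ k"
  by (induction k) (simp_all add: qc_one qc_mult)

lemma cPhi_mult: "cPhi (qc w * x) = w * cPhi x"
  by (simp add: qc_def cPhi_def complex_eq_iff)

lemma cPsi_mult: "cPsi (qc w * x) = w * cPsi x"
  by (simp add: qc_def cPsi_def complex_eq_iff algebra_simps)

lemma norm_qc: "norm (qc w) = cmod w"
  by (simp add: qc_def norm_quat_def cmod_def)

lemma bl_cPhi: "bounded_linear cPhi"
  by (rule bounded_linear_intro[where K=1])
     (auto simp: cPhi_def norm_quat_def cmod_def complex_eq_iff intro!: real_sqrt_le_mono)

lemma bl_cPsi: "bounded_linear cPsi"
  by (rule bounded_linear_intro[where K=1])
     (auto simp: cPsi_def norm_quat_def cmod_def complex_eq_iff intro!: real_sqrt_le_mono)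

lemma norm_quat_cc: "norm x = sqrt ((cmod (cPhi x))\<^sup>2 + (cmod (cPsi x))\<^sup>2)"
  by (simp add: norm_quat_def cPhi_def cPsi_def cmod_def add.assoc)

lemma circle_qc: "r *\<^sub>R (of_real (cos \<theta>) + qe1 * of_real (sin \<theta>)) = qc (complex_of_real r * cis \<theta>)"
  by (simp add: quat_eq_iff qc_def qe1_def of_real_def)

lemma qe1_imag: "qe1 \<in> imag_units"
  by (simp add: imag_units_def quat_eq_iff qe1_def)

locale sr =
  fixes f :: "quat \<Rightarrow> quat" and a :: "nat \<Rightarrow> quat"
  assumes ser: "\<forall>q\<in>qball. (\<lambda>n. q ^ n * a n) sums f q"
begin

definition cF :: "real \<Rightarrow> nat \<Rightarrow> complex" where "cF s k = cPhi (a k) * complex_of_real (s ^ k)"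
definition cG :: "real \<Rightarrow> nat \<Rightarrow> complex" where "cG s k = cPsi (a k) * complex_of_real (s ^ k)"
definition N :: "real \<Rightarrow> real \<Rightarrow> real" where "N s \<theta> = norm (f (qc (complex_of_real s * cis \<theta>)))"

lemma FF_sums:
  assumes "cmod w < 1"
  shows "(\<lambda>k. cPhi (a k) * w ^ k) sums cPhi (f (qc w))"
    and "(\<lambda>k. cPsi (a k) * w ^ k) sums cPsi (f (qc w))"
proof -
  have "qc w \<in> qball" using assms by (simp add: qball_def norm_qc)
  then have S: "(\<lambda>n. qc w ^ n * a n) sums f (qc w)" using ser by blast
  show "(\<lambda>k. cPhi (a k) * w ^ k) sums cPhi (f (qc w))"
    using bounded_linear.sums[OF bl_cPhi S] by (simp add: qc_power[symmetric] cPhi_mult mult.commute)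
  show "(\<lambda>k. cPsi (a k) * w ^ k) sums cPsi (f (qc w))"
    using bounded_linear.sums[OF bl_cPsi S] by (simp add: qc_power[symmetric] cPsi_mult mult.commute)
qed

lemma cFG_summable:
  assumes s: "0 \<le> s" "s < 1"
  shows "summable (\<lambda>k. norm (cF s k))" "summable (\<lambda>k. norm (cG s k))"
proof -
  define w where "w = complex_of_real ((1 + s) / 2)"
  have e: "cmod w = (1 + s) / 2" unfolding w_def norm_of_real using s by simp
  have w: "cmod w < 1" "cmod (complex_of_real s) < cmod w" using s by (auto simp: e)
  show "summable (\<lambda>k. norm (cF s k))"
    using powser_insidea[OF sums_summable[OF FF_sums(1)[OF w(1)]] w(2)]
    by (simp add: cF_def of_real_power)
  show "summable (\<lambda>k. norm (cG s k))"
    using powser_insidea[OF sums_summable[OF FF_sums(2)[OF w(1)]] w(2)]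
    by (simp add: cG_def of_real_power)
qed

lemma fs_cFG:
  assumes s: "0 \<le> s" "s < 1"
  shows "fs (cF s) \<theta> = cPhi (f (qc (complex_of_real s * cis \<theta>)))"
    and "fs (cG s) \<theta> = cPsi (f (qc (complex_of_real s * cis \<theta>)))"
proof -
  have w: "cmod (complex_of_real s * cis \<theta>) < 1" using s by (simp add: norm_mult)
  have pw: "(complex_of_real s * cis \<theta>) ^ k = complex_of_real (s ^ k) * cis (real k * \<theta>)" for k
    by (simp add: power_mult_distrib Complex.DeMoivre)
  show "fs (cF s) \<theta> = cPhi (f (qc (complex_of_real s * cis \<theta>)))"
    using FF_sums(1)[OF w] unfolding fs_def cF_def pw by (simp add: sums_iff mult.assoc)
  show "fs (cG s) \<theta> = cPsi (f (qc (complex_of_real s * cis \<theta>)))"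
    using FF_sums(2)[OF w] unfolding fs_def cG_def pw by (simp add: sums_iff mult.assoc)
qed

lemma N_eq:
  assumes s: "0 \<le> s" "s < 1"
  shows "N s \<theta> = sqrt ((cmod (fs (cF s) \<theta>))\<^sup>2 + (cmod (fs (cG s) \<theta>))\<^sup>2)"
  unfolding N_def fs_cFG[OF s] by (rule norm_quat_cc)

lemma N_cont:
  assumes s: "0 \<le> s" "s < 1"
  shows "continuous_on A (N s)"
proof -
  have "continuous_on A (\<lambda>\<theta>. sqrt ((cmod (fs (cF s) \<theta>))\<^sup>2 + (cmod (fs (cG s) \<theta>))\<^sup>2))"
    by (intro continuous_intros fs_cont cFG_summable[OF s])
  then show ?thesis using N_eq[OF s] by (simp add: fun_eq_iff[symmetric] cong: continuous_on_cong)
qed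

lemma N_nonneg: "0 \<le> N s \<theta>" by (simp add: N_def)

end

lemma cs2: fixes x y a b :: real shows "x * a + y * b \<le> sqrt ((x\<^sup>2 + y\<^sup>2) * (a\<^sup>2 + b\<^sup>2))"
proof (rule real_le_rsqrt)
  have "(x\<^sup>2 + y\<^sup>2) * (a\<^sup>2 + b\<^sup>2) - (x * a + y * b)\<^sup>2 = (x * b - y * a)\<^sup>2"
    by (simp add: power2_eq_square algebra_simps)
  then show "(x * a + y * b)\<^sup>2 \<le> (x\<^sup>2 + y\<^sup>2) * (a\<^sup>2 + b\<^sup>2)"
    by (metis diff_ge_0_iff_ge zero_le_power2)
qed

lemma cs_bound:
  fixes u v A B :: complex
  assumes uv: "(cmod u)\<^sup>2 + (cmod v)\<^sup>2 = 1"
  shows "cmod (cnj u * A + cnj v * B) \<le> sqrt ((cmod A)\<^sup>2 + (cmod B)\<^sup>2)"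
proof -
  have "cmod (cnj u * A + cnj v * B) \<le> cmod u * cmod A + cmod v * cmod B"
    by (metis complex_mod_cnj norm_mult norm_triangle_ineq)
  also have "\<dots> \<le> sqrt (((cmod u)\<^sup>2 + (cmod v)\<^sup>2) * ((cmod A)\<^sup>2 + (cmod B)\<^sup>2))"
    by (rule cs2)
  finally show ?thesis using uv by simp
qed

lemma unit_choice:
  fixes A B :: complex
  assumes D: "D = sqrt ((cmod A)\<^sup>2 + (cmod B)\<^sup>2)" and D0: "D \<noteq> 0"
  shows "(cmod (A / complex_of_real D))\<^sup>2 + (cmod (B / complex_of_real D))\<^sup>2 = 1"
    and "cnj (A / complex_of_real D) * A + cnj (B / complex_of_real D) * B = complex_of_real D"
proof -
  have "0 \<le> D" unfolding D by simp
  then have Dp: "0 < D" using D0 by simp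
  have D2: "D\<^sup>2 = (cmod A)\<^sup>2 + (cmod B)\<^sup>2" using D by simp
  show "(cmod (A / complex_of_real D))\<^sup>2 + (cmod (B / complex_of_real D))\<^sup>2 = 1"
  proof -
    have AB: "\<not> (A = 0 \<and> B = 0)" using D D0 by auto
    show ?thesis using Dp D2 AB by (simp add: norm_divide power_divide add_divide_distrib[symmetric])
  qed
  have "cnj (A / complex_of_real D) * A + cnj (B / complex_of_real D) * B
      = (A * cnj A + B * cnj B) / complex_of_real D"
    by (simp add: field_simps add_divide_distrib)
  also have "A * cnj A + B * cnj B = complex_of_real (D\<^sup>2)"
    unfolding D2 by (simp only: of_real_add complex_norm_square)
  also have "complex_of_real (D\<^sup>2) / complex_of_real D = complex_of_real D"
    using Dp by (simp add: power2_eq_square)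
  finally show "cnj (A / complex_of_real D) * A + cnj (B / complex_of_real D) * B = complex_of_real D" .
qed

lemma fs_comb:
  assumes c1: "summable (\<lambda>k. norm (c1 k))" and c2: "summable (\<lambda>k. norm (c2 k))"
  shows "summable (\<lambda>k. norm (x * c1 k + y * c2 k))"
    and "fs (\<lambda>k. x * c1 k + y * c2 k) \<theta> = x * fs c1 \<theta> + y * fs c2 \<theta>"
proof -
  have "summable (\<lambda>k. norm x * norm (c1 k) + norm y * norm (c2 k))"
    by (intro summable_add summable_mult c1 c2)
  then show "summable (\<lambda>k. norm (x * c1 k + y * c2 k))"
  proof (rule summable_comparison_test'[where N=0])
    fix k
    have "norm (x * c1 k + y * c2 k) \<le> norm (x * c1 k) + norm (y * c2 k)" by (rule norm_triangle_ineq)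
    then show "norm (norm (x * c1 k + y * c2 k)) \<le> norm x * norm (c1 k) + norm y * norm (c2 k)"
      by (simp add: norm_mult)
  qed
  have s1: "summable (\<lambda>k. x * (c1 k * cis (real k * \<theta>)))" by (intro summable_mult fs_summable c1)
  have s2: "summable (\<lambda>k. y * (c2 k * cis (real k * \<theta>)))" by (intro summable_mult fs_summable c2)
  show "fs (\<lambda>k. x * c1 k + y * c2 k) \<theta> = x * fs c1 \<theta> + y * fs c2 \<theta>"
    unfolding fs_def
    using suminf_add[OF s1 s2] suminf_mult[OF fs_summable[OF c1], of x] suminf_mult[OF fs_summable[OF c2], of y]
    by (simp add: algebra_simps)
qed

context sr begin

lemma N_integrable:
  assumes s: "0 \<le> s" "s < 1"
  shows "N s integrable_on {-pi..pi}"
  by (rule integrable_continuous_real[OF N_cont[OF s]])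

lemma comb_facts:
  assumes s: "0 \<le> s" "s < 1" and uv: "(cmod u)\<^sup>2 + (cmod v)\<^sup>2 = 1"
  defines "c \<equiv> (\<lambda>k. cnj u * cF s k + cnj v * cG s k)"
  shows "summable (\<lambda>k. norm (c k))" and "norm (fs c x) \<le> N s x"
proof -
  show "summable (\<lambda>k. norm (c k))" unfolding c_def by (rule fs_comb(1)[OF cFG_summable[OF s]])
  have "fs c x = cnj u * fs (cF s) x + cnj v * fs (cG s) x"
    unfolding c_def by (rule fs_comb(2)[OF cFG_summable[OF s]])
  then show "norm (fs c x) \<le> N s x"
    using cs_bound[OF uv] N_eq[OF s] by simp
qed

lemma coeff_bound:
  assumes r: "0 \<le> r" "r < 1"
  shows "norm (a n) * r ^ n \<le> integral {-pi..pi} (N r) / (2 * pi)"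
proof (cases "a n = 0")
  case True
  have "0 \<le> integral {-pi..pi} (N r)"
    by (rule integral_nonneg[OF N_integrable[OF r]]) (simp add: N_nonneg)
  then show ?thesis using True by simp
next
  case False
  define A where "A = cPhi (a n)"
  define B where "B = cPsi (a n)"
  define D where "D = norm (a n)"
  have D: "D = sqrt ((cmod A)\<^sup>2 + (cmod B)\<^sup>2)" unfolding D_def A_def B_def by (rule norm_quat_cc)
  have D0: "D \<noteq> 0" using False by (simp add: D_def)
  define u where "u = A / complex_of_real D"
  define v where "v = B / complex_of_real D"
  have uv: "(cmod u)\<^sup>2 + (cmod v)\<^sup>2 = 1" unfolding u_def v_def by (rule unit_choice(1)[OF D D0])
  have uv2: "cnj u * A + cnj v * B = complex_of_real D" unfolding u_def v_def by (rule unit_choice(2)[OF D D0])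
  define c where "c = (\<lambda>k. cnj u * cF r k + cnj v * cG r k)"
  have cs: "summable (\<lambda>k. norm (c k))" and cb: "\<And>x. norm (fs c x) \<le> N r x"
    using comb_facts[OF r uv] unfolding c_def by auto
  have cn: "c n = complex_of_real (D * r ^ n)"
  proof -
    have "c n = (cnj u * A + cnj v * B) * complex_of_real (r ^ n)"
      by (simp add: c_def cF_def cG_def A_def B_def algebra_simps)
    then show ?thesis using uv2 by simp
  qed
  have I: "((\<lambda>x. cis (-(real n * x)) * fs c x) has_integral (complex_of_real (2 * pi) * c n)) {-pi..pi}"
    by (rule fs_coeff[OF cs])
  have "norm (integral {-pi..pi} (\<lambda>x. cis (-(real n * x)) * fs c x)) \<le> integral {-pi..pi} (N r)"
  proof (rule Henstock_Kurzweil_Integration.integral_norm_bound_integral)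
    show "(\<lambda>x. cis (-(real n * x)) * fs c x) integrable_on {-pi..pi}" using I by blast
    show "N r integrable_on {-pi..pi}" by (rule N_integrable[OF r])
    show "norm (cis (-(real n * x)) * fs c x) \<le> N r x" if "x \<in> {-pi..pi}" for x
      using cb[of x] by (simp add: norm_mult)
  qed
  moreover have "norm (integral {-pi..pi} (\<lambda>x. cis (-(real n * x)) * fs c x)) = 2 * pi * (D * r ^ n)"
    using integral_unique[OF I] r by (simp add: cn norm_mult D_def norm_power)
  ultimately have "2 * pi * (D * r ^ n) \<le> integral {-pi..pi} (N r)" by simp
  then show ?thesis by (simp add: D_def field_simps)
qed

end

context sr begin

lemma pkN_cont:
  assumes r: "0 \<le> \<rho>" "\<rho> < 1" and s: "0 \<le> s" "s < 1"
  shows "continuous_on A (\<lambda>x. pk \<rho> (\<theta> - x) * N s x)"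
proof -
  have "continuous_on A (\<lambda>x. pk \<rho> (\<theta> - x))"
    by (rule continuous_on_compose2[OF pk_cont[OF r, of UNIV]]) (auto intro!: continuous_intros)
  then show ?thesis by (intro continuous_intros N_cont[OF s])
qed

lemma poisson_bound:
  assumes r: "0 \<le> \<rho>" "\<rho> < 1" and s: "0 \<le> s" "s < 1"
  shows "N (\<rho> * s) \<theta> \<le> integral {-pi..pi} (\<lambda>x. pk \<rho> (\<theta> - x) * N s x) / (2 * pi)"
proof -
  have "\<rho> * s \<le> 1 * s" by (rule mult_right_mono) (use r s in auto)
  then have rs: "0 \<le> \<rho> * s" "\<rho> * s < 1" using r s by auto
  have intW: "(\<lambda>x. pk \<rho> (\<theta> - x) * N s x) integrable_on {-pi..pi}"
    by (rule integrable_continuous_real[OF pkN_cont[OF r s]])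
  have I0: "0 \<le> integral {-pi..pi} (\<lambda>x. pk \<rho> (\<theta> - x) * N s x)"
    by (rule integral_nonneg[OF intW]) (simp add: N_nonneg pk_nonneg[OF r])
  define A where "A = fs (cF (\<rho> * s)) \<theta>"
  define B where "B = fs (cG (\<rho> * s)) \<theta>"
  define D where "D = N (\<rho> * s) \<theta>"
  have D: "D = sqrt ((cmod A)\<^sup>2 + (cmod B)\<^sup>2)" unfolding D_def A_def B_def by (rule N_eq[OF rs])
  show ?thesis
  proof (cases "D = 0")
    case True then show ?thesis using I0 by (simp add: D_def)
  next
    case D0: False
    define u where "u = A / complex_of_real D"
    define v where "v = B / complex_of_real D"
    have uv: "(cmod u)\<^sup>2 + (cmod v)\<^sup>2 = 1" unfolding u_def v_def by (rule unit_choice(1)[OF D D0])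
    have uv2: "cnj u * A + cnj v * B = complex_of_real D" unfolding u_def v_def by (rule unit_choice(2)[OF D D0])
    define c where "c = (\<lambda>k. cnj u * cF s k + cnj v * cG s k)"
    have cs: "summable (\<lambda>k. norm (c k))" and cb: "\<And>x. norm (fs c x) \<le> N s x"
      using comb_facts[OF s uv] unfolding c_def by auto
    have P: "((\<lambda>x. complex_of_real (pk \<rho> (\<theta> - x)) * fs c x) has_integral
          (complex_of_real (2 * pi) * (\<Sum>k. c k * (complex_of_real (\<rho> ^ k) * cis (real k * \<theta>))))) {-pi..pi}"
      by (rule poisson[OF cs r])
    have "(\<Sum>k. c k * (complex_of_real (\<rho> ^ k) * cis (real k * \<theta>))) = fs (\<lambda>k. cnj u * cF (\<rho> * s) k + cnj v * cG (\<rho> * s) k) \<theta>"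
      unfolding fs_def by (rule suminf_cong) (simp add: c_def cF_def cG_def power_mult_distrib algebra_simps)
    also have "\<dots> = cnj u * A + cnj v * B"
      unfolding A_def B_def by (rule fs_comb(2)[OF cFG_summable[OF rs]])
    also have "\<dots> = complex_of_real D" by (rule uv2)
    finally have sD: "(\<Sum>k. c k * (complex_of_real (\<rho> ^ k) * cis (real k * \<theta>))) = complex_of_real D" .
    have "norm (integral {-pi..pi} (\<lambda>x. complex_of_real (pk \<rho> (\<theta> - x)) * fs c x))
          \<le> integral {-pi..pi} (\<lambda>x. pk \<rho> (\<theta> - x) * N s x)"
    proof (rule Henstock_Kurzweil_Integration.integral_norm_bound_integral[OF _ intW])
      show "(\<lambda>x. complex_of_real (pk \<rho> (\<theta> - x)) * fs c x) integrable_on {-pi..pi}" using P by blast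
      show "norm (complex_of_real (pk \<rho> (\<theta> - x)) * fs c x) \<le> pk \<rho> (\<theta> - x) * N s x" for x
        using cb[of x] pk_nonneg[OF r, of "\<theta> - x"] by (simp add: norm_mult mult_left_mono)
    qed
    moreover have "norm (integral {-pi..pi} (\<lambda>x. complex_of_real (pk \<rho> (\<theta> - x)) * fs c x)) = 2 * pi * D"
      unfolding integral_unique[OF P] sD using D by (simp add: norm_mult)
    ultimately have "2 * pi * D \<le> integral {-pi..pi} (\<lambda>x. pk \<rho> (\<theta> - x) * N s x)" by simp
    then show ?thesis by (simp add: D_def field_simps)
  qed
qed

lemma pk_integral:
  assumes r: "0 \<le> \<rho>" "\<rho> < 1"
  shows "integral {-pi..pi} (\<lambda>x. pk \<rho> (\<theta> - x)) = 2 * pi"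
proof -
  have "((\<lambda>x. complex_of_real (pk \<rho> (\<theta> - x)) * cis (real 0 * x)) has_integral
          (complex_of_real (2 * pi) * (complex_of_real (\<rho> ^ 0) * cis (real 0 * \<theta>)))) {-pi..pi}"
    by (rule pk_int[OF r])
  then have "((\<lambda>x. complex_of_real (pk \<rho> (\<theta> - x))) has_integral complex_of_real (2 * pi)) {-pi..pi}"
    by simp
  from has_integral_linear[OF this bounded_linear_Re]
  have "((\<lambda>x. pk \<rho> (\<theta> - x)) has_integral 2 * pi) {-pi..pi}" by (simp add: o_def)
  then show ?thesis by (rule integral_unique)
qed

end

lemma integral_scale_right:
  fixes f :: "real \<Rightarrow> real"
  assumes "f integrable_on S"
  shows "integral S (\<lambda>x. f x * c) = integral S f * c"
  by (rule integral_unique[OF has_integral_mult_left[OF integrable_integral[OF assms]]])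

context sr begin

definition mm :: "real \<Rightarrow> real \<Rightarrow> real" where
  "mm p r = integral {-pi..pi} (\<lambda>\<theta>. N r \<theta> powr p) / (2 * pi)"

lemma Np_cont:
  assumes s: "0 \<le> s" "s < 1" and p: "1 \<le> p"
  shows "continuous_on A (\<lambda>x. N s x powr p)"
  by (rule continuous_on_powr') (use N_cont[OF s] N_nonneg p in \<open>auto intro: continuous_intros\<close>)

lemma K_cont:
  assumes r: "0 \<le> \<rho>" "\<rho> < 1" and s: "0 \<le> s" "s < 1" and p: "1 \<le> p"
  shows "continuous_on A (\<lambda>(\<theta>, x). pk \<rho> (\<theta> - x) * N s x powr p)"
proof -
  have c1: "continuous_on A (\<lambda>z. pk \<rho> (fst z - snd z))"
    by (rule continuous_on_compose2[OF pk_cont[OF r, of UNIV]]) (auto intro!: continuous_intros)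
  have c2: "continuous_on A (\<lambda>z. N s (snd z) powr p)"
    by (rule continuous_on_compose2[OF Np_cont[OF s p, of UNIV]]) (auto intro!: continuous_intros)
  have "continuous_on A (\<lambda>z. pk \<rho> (fst z - snd z) * N s (snd z) powr p)"
    by (intro continuous_intros c1 c2)
  then show ?thesis by (simp add: case_prod_beta)
qed

lemma pointwise_step:
  assumes r: "0 \<le> \<rho>" "\<rho> < 1" and s: "0 \<le> s" "s < 1" and p: "1 \<le> p"
  shows "N (\<rho> * s) \<theta> powr p \<le> integral {-pi..pi} (\<lambda>x. pk \<rho> (\<theta> - x) * N s x powr p) * (1 / (2 * pi))"
proof -
  define c :: real where "c = 1 / (2 * pi)"
  define w where "w = (\<lambda>x. pk \<rho> (\<theta> - x) * c)"
  have pc: "continuous_on {-pi..pi} (\<lambda>x. pk \<rho> (\<theta> - x))"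
    by (rule continuous_on_compose2[OF pk_cont[OF r, of UNIV]]) (auto intro!: continuous_intros)
  have cw: "continuous_on {-pi..pi} w" unfolding w_def by (intro continuous_intros pc)
  have pint: "(\<lambda>x. pk \<rho> (\<theta> - x)) integrable_on {-pi..pi}" by (rule integrable_continuous_real[OF pc])
  have w1: "integral {-pi..pi} w = 1"
    unfolding w_def integral_scale_right[OF pint] pk_integral[OF r] by (simp add: c_def)
  have J: "(integral {-pi..pi} (\<lambda>x. w x * N s x)) powr p \<le> integral {-pi..pi} (\<lambda>x. w x * N s x powr p)"
    by (rule jensen_int[OF cw N_cont[OF s] _ _ w1 p]) (auto simp: w_def c_def pk_nonneg[OF r] N_nonneg)
  have i1: "(\<lambda>x. pk \<rho> (\<theta> - x) * N s x) integrable_on {-pi..pi}"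
    by (rule integrable_continuous_real[OF pkN_cont[OF r s]])
  have i2: "(\<lambda>x. pk \<rho> (\<theta> - x) * N s x powr p) integrable_on {-pi..pi}"
    by (rule integrable_continuous_real) (intro continuous_intros pc Np_cont[OF s p])
  have e1: "integral {-pi..pi} (\<lambda>x. w x * N s x) = integral {-pi..pi} (\<lambda>x. pk \<rho> (\<theta> - x) * N s x) * c"
    unfolding w_def integral_scale_right[OF i1, symmetric] by (simp add: mult_ac)
  have e2: "integral {-pi..pi} (\<lambda>x. w x * N s x powr p) = integral {-pi..pi} (\<lambda>x. pk \<rho> (\<theta> - x) * N s x powr p) * c"
    unfolding w_def integral_scale_right[OF i2, symmetric] by (simp add: mult_ac)
  have "N (\<rho> * s) \<theta> \<le> integral {-pi..pi} (\<lambda>x. pk \<rho> (\<theta> - x) * N s x) * c"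
    using poisson_bound[OF r s, of \<theta>] by (simp add: c_def)
  then have "N (\<rho> * s) \<theta> powr p \<le> (integral {-pi..pi} (\<lambda>x. pk \<rho> (\<theta> - x) * N s x) * c) powr p"
    using p by (intro powr_mono2) (auto simp: N_nonneg)
  also have "\<dots> \<le> integral {-pi..pi} (\<lambda>x. pk \<rho> (\<theta> - x) * N s x powr p) * c"
    using J unfolding e1 e2 .
  finally show ?thesis by (simp add: c_def)
qed

end

context sr begin

lemma mean_mono:
  assumes p: "1 \<le> p" and r: "0 \<le> r" "r \<le> s" "s < 1"
  shows "mm p r \<le> mm p s"
proof (cases "r = s")
  case True then show ?thesis by simp
next
  case False
  then have s0: "0 < s" using r by simp
  have s: "0 \<le> s" "s < 1" using s0 r by auto
  define \<rho> where "\<rho> = r / s"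
  have rho: "0 \<le> \<rho>" "\<rho> < 1" using r s0 False by (auto simp: \<rho>_def divide_simps)
  have rs: "\<rho> * s = r" using s0 by (simp add: \<rho>_def)
  define c :: real where "c = 1 / (2 * pi)"
  define K where "K = (\<lambda>\<theta> x. pk \<rho> (\<theta> - x) * N s x powr p)"
  define G where "G = (\<lambda>\<theta>. integral {-pi..pi} (K \<theta>))"
  have Kc: "continuous_on A (\<lambda>(\<theta>, x). K \<theta> x)" for A
    unfolding K_def by (rule K_cont[OF rho s p])
  have Gc: "continuous_on {-pi..pi} G"
    unfolding G_def interval_cbox by (rule integral_continuous_on_param[OF Kc])
  have Gi: "G integrable_on {-pi..pi}" by (rule integrable_continuous_real[OF Gc])
  have Nr: "(\<lambda>\<theta>. N r \<theta> powr p) integrable_on {-pi..pi}"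
    by (rule integrable_continuous_real[OF Np_cont]) (use r s p in auto)
  have Ns: "(\<lambda>x. N s x powr p) integrable_on {-pi..pi}"
    by (rule integrable_continuous_real[OF Np_cont[OF s p]])
  have step1: "integral {-pi..pi} (\<lambda>\<theta>. N r \<theta> powr p) \<le> integral {-pi..pi} (\<lambda>\<theta>. G \<theta> * c)"
  proof (rule integral_le[OF Nr])
    show "(\<lambda>\<theta>. G \<theta> * c) integrable_on {-pi..pi}" by (intro integrable_continuous_real continuous_intros Gc)
    show "N r \<theta> powr p \<le> G \<theta> * c" if "\<theta> \<in> {-pi..pi}" for \<theta>
      using pointwise_step[OF rho s p, of \<theta>] unfolding rs by (simp add: G_def K_def c_def)
  qed
  have swap: "integral {-pi..pi} G = integral {-pi..pi} (\<lambda>x. integral {-pi..pi} (\<lambda>\<theta>. K \<theta> x))"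
    unfolding G_def interval_cbox
    by (rule integral_swap_continuous) (rule Kc)
  have inner: "integral {-pi..pi} (\<lambda>\<theta>. K \<theta> x) = 2 * pi * N s x powr p" for x
  proof -
    have pc: "continuous_on {-pi..pi} (\<lambda>\<theta>. pk \<rho> (\<theta> - x))"
      by (rule continuous_on_compose2[OF pk_cont[OF rho, of UNIV]]) (auto intro!: continuous_intros)
    have "integral {-pi..pi} (\<lambda>\<theta>. K \<theta> x) = integral {-pi..pi} (\<lambda>\<theta>. pk \<rho> (\<theta> - x)) * N s x powr p"
      unfolding K_def by (rule integral_scale_right[OF integrable_continuous_real[OF pc]])
    also have "(\<lambda>\<theta>. pk \<rho> (\<theta> - x)) = (\<lambda>\<theta>. pk \<rho> (x - \<theta>))"
      by (rule ext) (metis minus_diff_eq pk_even)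
    also have "integral {-pi..pi} (\<lambda>\<theta>. pk \<rho> (x - \<theta>)) = 2 * pi" by (rule pk_integral[OF rho])
    finally show ?thesis .
  qed
  have "integral {-pi..pi} (\<lambda>\<theta>. G \<theta> * c) = integral {-pi..pi} G * c"
    by (rule integral_scale_right[OF Gi])
  also have "\<dots> = integral {-pi..pi} (\<lambda>x. N s x powr p * (2 * pi)) * c"
    unfolding swap inner by (simp add: mult_ac)
  also have "\<dots> = integral {-pi..pi} (\<lambda>x. N s x powr p)"
    unfolding integral_scale_right[OF Ns] by (simp add: c_def)
  finally have "integral {-pi..pi} (\<lambda>\<theta>. N r \<theta> powr p) \<le> integral {-pi..pi} (\<lambda>x. N s x powr p)"
    using step1 by simp
  then show ?thesis unfolding mm_def by (simp add: divide_right_mono)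
qed

end

lemma lim_bound:
  fixes x H :: real
  assumes "\<And>r. 0 < r \<Longrightarrow> r < 1 \<Longrightarrow> x * r ^ n \<le> H"
  shows "x \<le> H"
proof -
  have t: "((\<lambda>r. x * r ^ n) \<longlongrightarrow> x * 1 ^ n) (at_left (1::real))"
    by (intro tendsto_intros)
  have ev: "eventually (\<lambda>r. r \<in> {0<..<1}) (at_left (1::real))"
    by (intro eventually_at_left_real) auto
  have "x * 1 ^ n \<le> H"
    by (rule tendsto_le[OF trivial_limit_at_left_real tendsto_const t])
       (rule eventually_mono[OF ev], use assms in auto)
  then show ?thesis by simp
qed

context sr begin

lemma mm_nonneg: "0 \<le> mm p r"
proof -
  have "0 \<le> integral {-pi..pi} (\<lambda>\<theta>. N r \<theta> powr p)"
  proof (cases "(\<lambda>\<theta>. N r \<theta> powr p) integrable_on {-pi..pi}")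
    case True then show ?thesis by (rule integral_nonneg) simp
  next
    case False then show ?thesis by (simp add: not_integrable_integral)
  qed
  then show ?thesis by (simp add: mm_def)
qed

lemma mean_bound:
  assumes p: "1 \<le> p" and r: "0 \<le> r" "r < 1"
  shows "integral {-pi..pi} (N r) / (2 * pi) \<le> mm p r powr (1 / p)"
proof -
  define c :: real where "c = 1 / (2 * pi)"
  have cc: "continuous_on {-pi..pi} (\<lambda>x. c)" by (rule continuous_on_const)
  have w1: "integral {-pi..pi} (\<lambda>x. c) = 1" by (simp add: c_def)
  have J: "(integral {-pi..pi} (\<lambda>x. c * N r x)) powr p \<le> integral {-pi..pi} (\<lambda>x. c * N r x powr p)"
    by (rule jensen_int[OF cc N_cont[OF r] _ _ w1 p]) (auto simp: c_def N_nonneg)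
  have i1: "N r integrable_on {-pi..pi}" by (rule N_integrable[OF r])
  have i2: "(\<lambda>x. N r x powr p) integrable_on {-pi..pi}"
    by (rule integrable_continuous_real[OF Np_cont[OF r p]])
  have e1: "integral {-pi..pi} (\<lambda>x. c * N r x) = integral {-pi..pi} (N r) / (2 * pi)"
    using integral_scale_right[OF i1, of c] by (simp add: mult_ac c_def)
  have e2: "integral {-pi..pi} (\<lambda>x. c * N r x powr p) = mm p r"
    using integral_scale_right[OF i2, of c] by (simp add: mult_ac c_def mm_def)
  define X where "X = integral {-pi..pi} (N r) / (2 * pi)"
  have X0: "0 \<le> X" unfolding X_def
    by (intro divide_nonneg_pos integral_nonneg[OF i1]) (auto simp: N_nonneg)
  have "X powr p \<le> mm p r" using J unfolding e1 e2 X_def .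
  then have "(X powr p) powr (1 / p) \<le> mm p r powr (1 / p)"
    using p by (intro powr_mono2) auto
  moreover have "(X powr p) powr (1 / p) = X" using p X0 by (simp add: powr_powr)
  ultimately show ?thesis by (simp add: X_def)
qed

lemma integral_mean_eq: "integral_mean p f qe1 r = mm p r powr (1 / p)"
  unfolding integral_mean_def mm_def N_def circle_qc by simp

lemma finite_case:
  assumes p: "1 \<le> p" and fin: "hardy_norm p f < \<infinity>"
  shows "norm (a n) \<le> real_of_ereal (hardy_norm p f)" and "0 \<le> real_of_ereal (hardy_norm p f)"
proof -
  define h where "h = (\<lambda>r. integral_mean p f qe1 r)"
  have hm: "h x \<le> h y" if "0 \<le> x" "x \<le> y" "y < 1" for x y
    unfolding h_def integral_mean_eq using mean_mono[OF p that] p mm_nonneg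
    by (intro powr_mono2) auto
  have h0: "0 \<le> h r" for r unfolding h_def integral_mean_eq by simp
  have L: "Lim (at_left 1) (\<lambda>r. ereal (h r)) = (SUP r\<in>{0..<1}. ereal (h r))"
    by (rule mono_lim_ereal[OF hm])
  have hle: "ereal (h r) \<le> hardy_norm p f" if "r \<in> {0..<1}" for r
  proof -
    have "ereal (h r) \<le> (SUP r\<in>{0..<1}. ereal (h r))" using that by (rule SUP_upper)
    also have "\<dots> = Lim (at_left 1) (\<lambda>r. ereal (integral_mean p f qe1 r))" using L by (simp add: h_def)
    also have "\<dots> \<le> hardy_norm p f" unfolding hardy_norm_def
      by (rule SUP_upper[OF qe1_imag])
    finally show ?thesis .
  qed
  have hn: "hardy_norm p f = ereal (real_of_ereal (hardy_norm p f))"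
    using hle[of 0] h0[of 0] fin by (cases "hardy_norm p f") auto
  have hr: "h r \<le> real_of_ereal (hardy_norm p f)" if "r \<in> {0..<1}" for r
    using hle[OF that] by (subst (asm) hn) simp
  show "0 \<le> real_of_ereal (hardy_norm p f)" using hr[of 0] h0[of 0] by simp
  show "norm (a n) \<le> real_of_ereal (hardy_norm p f)"
  proof (rule lim_bound)
    fix r :: real assume r: "0 < r" "r < 1"
    have "norm (a n) * r ^ n \<le> integral {-pi..pi} (N r) / (2 * pi)" by (rule coeff_bound) (use r in auto)
    also have "\<dots> \<le> h r" unfolding h_def integral_mean_eq by (rule mean_bound) (use p r in auto)
    also have "\<dots> \<le> real_of_ereal (hardy_norm p f)" by (rule hr) (use r in auto)
    finally show "norm (a n) * r ^ n \<le> real_of_ereal (hardy_norm p f)" .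
  qed
qed

lemma inf_case:
  assumes fin: "hardy_norm_inf f < \<infinity>"
  shows "norm (a n) \<le> real_of_ereal (hardy_norm_inf f)"
proof -
  define S where "S = real_of_ereal (hardy_norm_inf f)"
  have le: "ereal (norm (f q)) \<le> hardy_norm_inf f" if "q \<in> qball" for q
    unfolding hardy_norm_inf_def using that by (rule SUP_upper)
  have z: "(0::quat) \<in> qball" by (simp add: qball_def)
  have hn: "hardy_norm_inf f = ereal S"
    using le[OF z] fin unfolding S_def by (cases "hardy_norm_inf f") auto
  have fb: "norm (f q) \<le> S" if "q \<in> qball" for q using le[OF that] hn by simp
  show ?thesis unfolding S_def[symmetric]
  proof (rule lim_bound)
    fix r :: real assume r: "0 < r" "r < 1"
    have Nb: "N r x \<le> S" for x
    proof -
      have "qc (complex_of_real r * cis x) \<in> qball" using r by (simp add: qball_def norm_qc norm_mult)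
      then show ?thesis unfolding N_def by (rule fb)
    qed
    have "norm (a n) * r ^ n \<le> integral {-pi..pi} (N r) / (2 * pi)" by (rule coeff_bound) (use r in auto)
    also have "integral {-pi..pi} (N r) \<le> integral {-pi..pi} (\<lambda>x. S)"
      by (rule integral_le[OF N_integrable]) (use r Nb in auto)
    also have "integral {-pi..pi} (\<lambda>x. S) = 2 * pi * S" by simp
    finally show "norm (a n) * r ^ n \<le> S" by (simp add: divide_right_mono)
  qed
qed

end

theorem lemma8p3:
  fixes f :: "quat \<Rightarrow> quat" and n :: nat
  assumes "slice_regular_ball f"
  shows "(\<forall>p::real. 1 \<le> p \<longrightarrow> hardy_norm p f < \<infinity> \<longrightarrow>
            norm ((slice_deriv ^^ n) f 0)
              \<le> sqrt 2 * fact n * exp (1 / p) * (1 + real n * p / 2) powr (1 / p)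
                 * real_of_ereal (hardy_norm p f))
       \<and> (hardy_norm_inf f < \<infinity> \<longrightarrow>
            norm ((slice_deriv ^^ n) f 0) \<le> fact n * real_of_ereal (hardy_norm_inf f))"
proof -
  obtain a where a: "\<forall>q\<in>qball. (\<lambda>n. q ^ n * a n) sums f q"
    using assms unfolding slice_regular_ball_def by blast
  interpret sr f a by unfold_locales (rule a)
  have d: "norm ((slice_deriv ^^ n) f 0) = fact n * norm (a n)"
    using slice_deriv_zero[OF a, of n] by simp
  show ?thesis
  proof (intro conjI allI impI)
    fix p :: real assume p: "1 \<le> p" and fin: "hardy_norm p f < \<infinity>"
    define H where "H = real_of_ereal (hardy_norm p f)"
    have aH: "norm (a n) \<le> H" and H0: "0 \<le> H" using finite_case[OF p fin] by (auto simp: H_def)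
    have k1: "1 \<le> sqrt (2::real)" by simp
    have k2: "1 \<le> exp (1 / p)" using p by simp
    have k3: "1 \<le> (1 + real n * p / 2) powr (1 / p)"
      by (rule ge_one_powr_ge_zero) (use p in auto)
    have "1 * 1 \<le> sqrt 2 * exp (1 / p)" by (rule mult_mono[OF k1 k2]) auto
    then have "1 * 1 \<le> (sqrt 2 * exp (1 / p)) * (1 + real n * p / 2) powr (1 / p)"
      by (intro mult_mono k3) auto
    then have K: "1 \<le> sqrt 2 * exp (1 / p) * (1 + real n * p / 2) powr (1 / p)" by simp
    have fH: "0 \<le> fact n * H" using H0 by simp
    have "norm ((slice_deriv ^^ n) f 0) \<le> fact n * H" unfolding d using aH by (simp add: mult_left_mono)
    also have "\<dots> \<le> (sqrt 2 * exp (1 / p) * (1 + real n * p / 2) powr (1 / p)) * (fact n * H)"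
      using mult_right_mono[OF K fH] by simp
    also have "\<dots> = sqrt 2 * fact n * exp (1 / p) * (1 + real n * p / 2) powr (1 / p) * H"
      by (simp add: mult_ac)
    finally show "norm ((slice_deriv ^^ n) f 0)
              \<le> sqrt 2 * fact n * exp (1 / p) * (1 + real n * p / 2) powr (1 / p)
                 * real_of_ereal (hardy_norm p f)" by (simp add: H_def)
  next
    assume fin: "hardy_norm_inf f < \<infinity>"
    show "norm ((slice_deriv ^^ n) f 0) \<le> fact n * real_of_ereal (hardy_norm_inf f)"
      unfolding d using inf_case[OF fin, of n] by (simp add: mult_left_mono)
  qed
qed

end
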